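(* Let $\nu$ be a bounded continuous valuation on Johnstone's dcpo $\mathcal J$ (Scott topology). For each Scott-open $U\subseteq\mathcal J$ let $\nu^*(U)=\nu(U)-\sum_{a\in N}\nu_{\{a\}}(U)$. Then $\nu^*$ is a bounded continuous valuation on $\mathcal J$.
   Context: Johnstone's dcpo: $\mathcal J=\mathbb N\times(\mathbb N\cup\{\infty\})$ ordered by $(a,b)\le(c,d)$ iff either ($a=c$ and $b\le d$) or ($d=\infty$ and $b\le c$). $N=\mathcal J\setminus\{(i,\infty):i\in\mathbb N\}$ is the set of non-maximal elements. For $n\in\mathbb N$ let $L_n=\{(j,n):j\in\mathbb N\}$. For $a=(j,n)\in N$, the sets $U_a=\{a\}\cup{\uparrow}L_{n+1}$ and $V_a={\uparrow}L_{n+1}$ are Scott-open with $V_a\subseteq U_a$ and $U_a\setminus V_a=\{a\}$, and $\nu_{\{a\}}$ is the continuous valuation $W\mapsto\nu(W\cap U_a)-\nu(W\cap V_a)$. A valuation is a strict, monotone, modular map $\mathcal OX\to[0,\infty]$; continuous if it preserves directed suprema of opens; bounded if $\nu(X)<\infty$. *)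

theory Defs
  imports "HOL-Analysis.Analysis" "HOL-Library.Extended_Nat"
begin

text \<open>Johnstone's dcpo: carrier nat \<times> enat (enat = nat \<union> {\<infinity>}).\<close>
type_synonym jpt = "nat \<times> enat"

definition jle :: "jpt \<Rightarrow> jpt \<Rightarrow> bool" where
  "jle x y \<longleftrightarrow> (fst x = fst y \<and> snd x \<le> snd y) \<or> (snd y = \<infinity> \<and> snd x \<le> enat (fst y))"

definition j_directed :: "jpt set \<Rightarrow> bool" where
  "j_directed D \<longleftrightarrow> D \<noteq> {} \<and> (\<forall>x\<in>D. \<forall>y\<in>D. \<exists>z\<in>D. jle x z \<and> jle y z)"

definition j_is_lub :: "jpt set \<Rightarrow> jpt \<Rightarrow> bool" where
  "j_is_lub D s \<longleftrightarrow> (\<forall>d\<in>D. jle d s) \<and> (\<forall>u. (\<forall>d\<in>D. jle d u) \<longrightarrow> jle s u)"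

definition j_upper :: "jpt set \<Rightarrow> bool" where
  "j_upper U \<longleftrightarrow> (\<forall>x\<in>U. \<forall>y. jle x y \<longrightarrow> y \<in> U)"

definition scott_open :: "jpt set \<Rightarrow> bool" where
  "scott_open U \<longleftrightarrow> j_upper U \<and>
     (\<forall>D s. j_directed D \<and> j_is_lub D s \<and> s \<in> U \<longrightarrow> D \<inter> U \<noteq> {})"

definition is_valuation :: "(jpt set \<Rightarrow> ennreal) \<Rightarrow> bool" where
  "is_valuation \<nu> \<longleftrightarrow>
     \<nu> {} = 0 \<and>
     (\<forall>U V. scott_open U \<and> scott_open V \<and> U \<subseteq> V \<longrightarrow> \<nu> U \<le> \<nu> V) \<and>
     (\<forall>U V. scott_open U \<and> scott_open V \<longrightarrow> \<nu> U + \<nu> V = \<nu> (U \<union> V) + \<nu> (U \<inter> V))"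

definition is_continuous_valuation :: "(jpt set \<Rightarrow> ennreal) \<Rightarrow> bool" where
  "is_continuous_valuation \<nu> \<longleftrightarrow> is_valuation \<nu> \<and>
     (\<forall>\<D>. \<D> \<noteq> {} \<and> (\<forall>U\<in>\<D>. scott_open U) \<and>
          (\<forall>U\<in>\<D>. \<forall>V\<in>\<D>. \<exists>W\<in>\<D>. U \<subseteq> W \<and> V \<subseteq> W)
        \<longrightarrow> \<nu> (\<Union>\<D>) = (SUP U\<in>\<D>. \<nu> U))"

definition is_bounded_continuous_valuation :: "(jpt set \<Rightarrow> ennreal) \<Rightarrow> bool" where
  "is_bounded_continuous_valuation \<nu> \<longleftrightarrow> is_continuous_valuation \<nu> \<and> \<nu> UNIV < \<infinity>"

definition Nset :: "jpt set" where
  "Nset = {(i, enat n) | i n. True}"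

definition Lset :: "nat \<Rightarrow> jpt set" where
  "Lset n = {(j, enat n) | j. True}"

definition jup :: "jpt set \<Rightarrow> jpt set" where
  "jup A = {y. \<exists>x\<in>A. jle x y}"

definition Vset :: "jpt \<Rightarrow> jpt set" where
  "Vset a = jup (Lset (Suc (the_enat (snd a))))"

definition Uset :: "jpt \<Rightarrow> jpt set" where
  "Uset a = insert a (Vset a)"

definition nu_single :: "(jpt set \<Rightarrow> ennreal) \<Rightarrow> jpt \<Rightarrow> jpt set \<Rightarrow> ennreal" where
  "nu_single \<nu> a W = \<nu> (W \<inter> Uset a) - \<nu> (W \<inter> Vset a)"

definition atom_sum :: "(jpt set \<Rightarrow> ennreal) \<Rightarrow> jpt set \<Rightarrow> ennreal" where
  "atom_sum \<nu> U = (\<Sum>\<^sub>\<infinity>a\<in>Nset. nu_single \<nu> a U)"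

definition nu_star :: "(jpt set \<Rightarrow> ennreal) \<Rightarrow> jpt set \<Rightarrow> ennreal" where
  "nu_star \<nu> U = \<nu> U - atom_sum \<nu> U"

end

theory Submission
  imports Defs
begin

definition G :: "nat \<Rightarrow> jpt set" where "G n = {x. enat n \<le> snd x}"

lemma lub_fin:
  assumes "j_is_lub D s" "D \<noteq> {}" "snd s = enat m" shows "s \<in> D"
proof (rule ccontr)
  assume ns: "s \<notin> D"
  have b: "\<And>d. d \<in> D \<Longrightarrow> fst d = fst s \<and> snd d < enat m"
  proof -
    fix d assume "d \<in> D"
    hence "jle d s" using assms(1) j_is_lub_def by blast
    hence "fst d = fst s \<and> snd d \<le> enat m" using assms(3) by (auto simp: jle_def)
    moreover have "d \<noteq> s" using \<open>d \<in> D\<close> ns by auto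
    moreover have "snd d \<noteq> snd s \<or> fst d \<noteq> fst s" using \<open>d \<noteq> s\<close> prod_eqI by blast
    ultimately show "fst d = fst s \<and> snd d < enat m" using assms(3)
      by (auto simp: order_le_less)
  qed
  obtain d0 where "d0 \<in> D" using assms(2) by blast
  then have "m > 0" using b[of d0] by (cases "snd d0") auto
  have "\<forall>d\<in>D. jle d (fst s, enat (m - 1))"
  proof
    fix d assume "d \<in> D"
    then have "fst d = fst s" "snd d < enat m" using b by auto
    then show "jle d (fst s, enat (m - 1))" using \<open>m > 0\<close>
      by (cases "snd d") (auto simp: jle_def)
  qed
  then have "jle s (fst s, enat (m - 1))" using assms(1) j_is_lub_def by blast
  then show False using assms(3) \<open>m > 0\<close> by (auto simp: jle_def)
qed

lemma lub_inf:
  assumes "j_is_lub D s" "snd s = \<infinity>" shows "\<exists>d\<in>D. enat n \<le> snd d"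
proof (rule ccontr)
  assume "\<not> ?thesis"
  hence h: "\<forall>d\<in>D. snd d \<le> enat n" by auto
  define i' where "i' = Suc (max n (fst s))"
  have "\<forall>d\<in>D. jle d (i', \<infinity>)"
  proof
    fix d assume "d \<in> D"
    have "enat n \<le> enat i'" by (simp add: i'_def)
    then have "snd d \<le> enat i'" using h \<open>d \<in> D\<close> by (blast intro: order_trans)
    then show "jle d (i', \<infinity>)" by (auto simp: jle_def)
  qed
  then have "jle s (i', \<infinity>)" using assms(1) j_is_lub_def by blast
  then show False using assms(2) i'_def by (auto simp: jle_def)
qed

lemma open_crit:
  assumes "j_upper E" "G n \<subseteq> E" shows "scott_open E"
  unfolding scott_open_def
proof (intro conjI allI impI assms(1))
  fix D s assume a: "j_directed D \<and> j_is_lub D s \<and> s \<in> E"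
  show "D \<inter> E \<noteq> {}"
  proof (cases "snd s")
    case (enat m)
    then have "s \<in> D" using lub_fin a j_directed_def by blast
    then show ?thesis using a by blast
  next
    case infinity
    then obtain d where "d \<in> D" "enat n \<le> snd d" using lub_inf a by blast
    then show ?thesis using assms(2) G_def by blast
  qed
qed

lemma open_empty: "scott_open {}" by (simp add: scott_open_def j_upper_def)

lemma open_Int: "scott_open A \<Longrightarrow> scott_open B \<Longrightarrow> scott_open (A \<inter> B)"
proof -
  assume a: "scott_open A" "scott_open B"
  show ?thesis unfolding scott_open_def
  proof (intro conjI allI impI)
    show "j_upper (A \<inter> B)" using a unfolding scott_open_def j_upper_def by blast
    fix D s assume h: "j_directed D \<and> j_is_lub D s \<and> s \<in> A \<inter> B"
    then obtain x where x: "x \<in> D" "x \<in> A" using a(1) unfolding scott_open_def by blast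
    obtain y where y: "y \<in> D" "y \<in> B" using h a(2) unfolding scott_open_def by blast
    obtain z where z: "z \<in> D" "jle x z" "jle y z" using h x y unfolding j_directed_def by blast
    have "z \<in> A" using a(1) x z unfolding scott_open_def j_upper_def by blast
    moreover have "z \<in> B" using a(2) y z unfolding scott_open_def j_upper_def by blast
    ultimately show "D \<inter> (A \<inter> B) \<noteq> {}" using z by blast
  qed
qed

lemma open_Union: "(\<And>U. U \<in> \<D> \<Longrightarrow> scott_open U) \<Longrightarrow> scott_open (\<Union>\<D>)"
  unfolding scott_open_def j_upper_def by blast

lemma open_Un: "scott_open A \<Longrightarrow> scott_open B \<Longrightarrow> scott_open (A \<union> B)"
  using open_Union[of "{A,B}"] by auto

lemma upper_G: "j_upper (G n)"
  unfolding j_upper_def G_def jle_def by (auto intro: order_trans)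

lemma open_G: "scott_open (G n)"
  using open_crit upper_G by blast

lemma open_UNIV: "scott_open UNIV"
  using open_crit[of UNIV 0] by (simp add: j_upper_def)

lemma open_GS:
  assumes "S \<subseteq> {x. snd x = enat k}" shows "scott_open (G (Suc k) \<union> S)"
proof (rule open_crit[of _ "Suc k"])
  show "j_upper (G (Suc k) \<union> S)"
    unfolding j_upper_def
  proof (intro ballI allI impI)
    fix x y assume "x \<in> G (Suc k) \<union> S" "jle x y"
    then consider "x \<in> G (Suc k)" | "x \<in> S" by blast
    then show "y \<in> G (Suc k) \<union> S"
    proof cases
      case 1 then show ?thesis using upper_G \<open>jle x y\<close> unfolding j_upper_def by blast
    next
      case 2
      then have sx: "snd x = enat k" using assms by auto
      show ?thesis
      proof (cases "y = x")
        case True then show ?thesis using 2 by simp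
      next
        case False
        have "snd y \<noteq> snd x \<or> fst y \<noteq> fst x" using False prod_eqI by blast
        with \<open>jle x y\<close> sx have "snd y = \<infinity> \<or> (enat k < snd y)"
          unfolding jle_def by (auto simp: order_le_less)
        then have "enat (Suc k) \<le> snd y" by (auto simp: Suc_ile_eq)
        then show ?thesis by (simp add: G_def)
      qed
    qed
  qed
qed auto

definition Ua where "Ua j k = insert (j, enat k) (G (Suc k))"

lemma jup_L: "jup (Lset n) = G n"
proof
  show "jup (Lset n) \<subseteq> G n"
    unfolding jup_def Lset_def G_def jle_def by auto
  show "G n \<subseteq> jup (Lset n)"
  proof
    fix y assume "y \<in> G n"
    then have "enat n \<le> snd y" by (simp add: G_def)
    moreover have "(fst y, enat n) \<in> Lset n" by (simp add: Lset_def)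
    ultimately have "jle (fst y, enat n) y" "(fst y, enat n) \<in> Lset n" by (auto simp: jle_def)
    then show "y \<in> jup (Lset n)" unfolding jup_def by blast
  qed
qed

lemma Vset_eq: "Vset (j, enat k) = G (Suc k)"
  by (simp add: Vset_def jup_L)

lemma Uset_eq: "Uset (j, enat k) = Ua j k"
  by (simp add: Uset_def Vset_eq Ua_def)

lemma open_Ua: "scott_open (Ua j k)"
  using open_GS[of "{(j, enat k)}" k] by (simp add: Ua_def)


definition E where "E k J = G (Suc k) \<union> {(j, enat k) | j. j < J}"

lemma open_E: "scott_open (E k J)"
  unfolding E_def by (rule open_GS) auto

lemma box_bound:
  fixes \<mu> :: "jpt set \<Rightarrow> real"
  assumes mono: "\<And>A B. scott_open A \<Longrightarrow> scott_open B \<Longrightarrow> A \<subseteq> B \<Longrightarrow> \<mu> A \<le> \<mu> B"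
    and modular: "\<And>A B. scott_open A \<Longrightarrow> scott_open B \<Longrightarrow> \<mu> A + \<mu> B = \<mu> (A \<union> B) + \<mu> (A \<inter> B)"
  shows "(\<Sum>k<M. \<Sum>j<J. \<mu> (Ua j k) - \<mu> (G (Suc k))) \<le> \<mu> UNIV - \<mu> {}"
proof -
  have A: "\<mu> (E k J) = \<mu> (G (Suc k)) + (\<Sum>j<J. \<mu> (Ua j k) - \<mu> (G (Suc k)))" for k J
  proof (induction J)
    case 0 then show ?case by (simp add: E_def)
  next
    case (Suc J)
    have u: "E k J \<union> Ua J k = E k (Suc J)"
      unfolding E_def Ua_def by auto
    have i: "E k J \<inter> Ua J k = G (Suc k)"
      unfolding E_def Ua_def G_def by auto
    have "\<mu> (E k J) + \<mu> (Ua J k) = \<mu> (E k (Suc J)) + \<mu> (G (Suc k))"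
      using modular[OF open_E open_Ua, of k J J k] u i by simp
    then show ?case using Suc by simp
  qed
  have B: "(\<Sum>j<J. \<mu> (Ua j k) - \<mu> (G (Suc k))) \<le> \<mu> (G k) - \<mu> (G (Suc k))" for k
  proof -
    have "E k J \<subseteq> G k" unfolding E_def G_def by (auto simp: Suc_ile_eq)
    then have "\<mu> (E k J) \<le> \<mu> (G k)" using mono open_E open_G by blast
    then show ?thesis using A[of k J] by simp
  qed
  have "(\<Sum>k<M. \<Sum>j<J. \<mu> (Ua j k) - \<mu> (G (Suc k))) \<le> (\<Sum>k<M. \<mu> (G k) - \<mu> (G (Suc k)))"
    by (rule sum_mono) (rule B)
  also have "\<dots> = \<mu> (G 0) - \<mu> (G M)"
    by (rule sum_lessThan_telescope'[of "\<lambda>k. \<mu> (G k)"])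
  also have "G 0 = UNIV" by (auto simp: G_def zero_enat_def[symmetric])
  finally have "(\<Sum>k<M. \<Sum>j<J. \<mu> (Ua j k) - \<mu> (G (Suc k))) \<le> \<mu> UNIV - \<mu> (G M)" .
  moreover have "\<mu> {} \<le> \<mu> (G M)" using mono open_empty open_G by blast
  ultimately show ?thesis by simp
qed


lemma ens: "(f::_ \<Rightarrow> ennreal) summable_on S"
  by (rule nonneg_summable_on_complete) simp

context
  fixes \<nu> :: "jpt set \<Rightarrow> ennreal"
  assumes bcv: "is_bounded_continuous_valuation \<nu>"
begin

private lemma val: "is_valuation \<nu>" using bcv
  unfolding is_bounded_continuous_valuation_def is_continuous_valuation_def by blast

private lemma nu_empty: "\<nu> {} = 0" using val is_valuation_def by blast
private lemma nu_mono: "scott_open A \<Longrightarrow> scott_open B \<Longrightarrow> A \<subseteq> B \<Longrightarrow> \<nu> A \<le> \<nu> B"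
  using val is_valuation_def by blast
private lemma nu_mod: "scott_open A \<Longrightarrow> scott_open B \<Longrightarrow> \<nu> A + \<nu> B = \<nu> (A \<union> B) + \<nu> (A \<inter> B)"
  using val is_valuation_def by blast
private lemma nu_fin: "scott_open A \<Longrightarrow> \<nu> A < top"
proof -
  assume "scott_open A"
  then have "\<nu> A \<le> \<nu> UNIV" using nu_mono[OF _ open_UNIV, of A] by simp
  moreover have "\<nu> UNIV < \<infinity>" using bcv unfolding is_bounded_continuous_valuation_def by blast
  ultimately show ?thesis by (simp add: infinity_ennreal_def)
qed

definition r where "r A = enn2real (\<nu> A)"

private lemma nu_eq: "scott_open A \<Longrightarrow> \<nu> A = ennreal (r A)"
  using nu_fin r_def by simp

private lemma r_nonneg: "0 \<le> r A" by (simp add: r_def)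
private lemma r_empty: "r {} = 0" by (simp add: r_def nu_empty)

private lemma r_mono: "scott_open A \<Longrightarrow> scott_open B \<Longrightarrow> A \<subseteq> B \<Longrightarrow> r A \<le> r B"
  unfolding r_def using nu_mono nu_fin enn2real_mono by blast

private lemma r_mod: "scott_open A \<Longrightarrow> scott_open B \<Longrightarrow> r A + r B = r (A \<union> B) + r (A \<inter> B)"
proof -
  assume a: "scott_open A" "scott_open B"
  have "ennreal (r A + r B) = ennreal (r A) + ennreal (r B)" using r_nonneg by (simp add: ennreal_plus)
  also have "\<dots> = \<nu> A + \<nu> B" using nu_eq a by simp
  also have "\<dots> = \<nu> (A \<union> B) + \<nu> (A \<inter> B)" using nu_mod[OF a] .
  also have "\<dots> = ennreal (r (A \<union> B)) + ennreal (r (A \<inter> B))"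
    using nu_eq open_Un[OF a] open_Int[OF a] by simp
  also have "\<dots> = ennreal (r (A \<union> B) + r (A \<inter> B))" using r_nonneg by (simp add: ennreal_plus)
  finally have "ennreal (r A + r B) = ennreal (r (A \<union> B) + r (A \<inter> B))" .
  moreover have "0 \<le> r A + r B" "0 \<le> r (A \<union> B) + r (A \<inter> B)" using r_nonneg by (simp_all add: add_nonneg_nonneg)
  ultimately show ?thesis using ennreal_inj by blast
qed

definition rs where "rs W j k = r (W \<inter> Ua j k) - r (W \<inter> G (Suc k))"

private lemma rel_bound:
  assumes U: "scott_open U" and V: "scott_open V" and UV: "U \<subseteq> V"
  shows "(\<Sum>k<M. \<Sum>j<J. rs V j k - rs U j k) \<le> r V - r U"
    and "rs U j k \<le> rs V j k"
proof -
  define \<mu> where "\<mu> W = r (V \<inter> W) - r (U \<inter> W)" for W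
  have mono: "\<mu> A \<le> \<mu> B" if "scott_open A" "scott_open B" "A \<subseteq> B" for A B
  proof -
    have o: "scott_open (V \<inter> A)" "scott_open (U \<inter> B)" using that U V open_Int by auto
    have ii: "(V \<inter> A) \<inter> (U \<inter> B) = U \<inter> A" using UV that(3) by blast
    have "r (V \<inter> A) + r (U \<inter> B) = r ((V \<inter> A) \<union> (U \<inter> B)) + r (U \<inter> A)"
      using r_mod[OF o] unfolding ii .
    moreover have "(V \<inter> A) \<union> (U \<inter> B) \<subseteq> V \<inter> B" using UV that(3) by blast
    moreover have "scott_open ((V \<inter> A) \<union> (U \<inter> B))" "scott_open (V \<inter> B)"
      using o open_Un open_Int V that by auto
    ultimately have "r (V \<inter> A) + r (U \<inter> B) \<le> r (V \<inter> B) + r (U \<inter> A)"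
      using r_mono by fastforce
    then show ?thesis unfolding \<mu>_def by simp
  qed
  have modular: "\<mu> A + \<mu> B = \<mu> (A \<union> B) + \<mu> (A \<inter> B)" if "scott_open A" "scott_open B" for A B
  proof -
    have e: "(X \<inter> A) \<union> (X \<inter> B) = X \<inter> (A \<union> B)" "(X \<inter> A) \<inter> (X \<inter> B) = X \<inter> (A \<inter> B)" for X
      by blast+
    have 1: "r (V \<inter> A) + r (V \<inter> B) = r (V \<inter> (A \<union> B)) + r (V \<inter> (A \<inter> B))"
      using r_mod[OF open_Int[OF V that(1)] open_Int[OF V that(2)]] unfolding e .
    have 2: "r (U \<inter> A) + r (U \<inter> B) = r (U \<inter> (A \<union> B)) + r (U \<inter> (A \<inter> B))"
      using r_mod[OF open_Int[OF U that(1)] open_Int[OF U that(2)]] unfolding e .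
    show ?thesis using 1 2 unfolding \<mu>_def by simp
  qed
  have eq: "\<mu> (Ua j k) - \<mu> (G (Suc k)) = rs V j k - rs U j k" for j k
    unfolding \<mu>_def rs_def by simp
  have "(\<Sum>k<M. \<Sum>j<J. \<mu> (Ua j k) - \<mu> (G (Suc k))) \<le> \<mu> UNIV - \<mu> {}"
    by (rule box_bound) (use mono modular in auto)
  then show "(\<Sum>k<M. \<Sum>j<J. rs V j k - rs U j k) \<le> r V - r U"
    unfolding eq by (simp add: \<mu>_def)
  have sub: "G (Suc k) \<subseteq> Ua j k" by (auto simp: Ua_def)
  have "\<mu> (G (Suc k)) \<le> \<mu> (Ua j k)"
    by (rule mono[OF open_G open_Ua sub])
  then show "rs U j k \<le> rs V j k" using eq[of j k] by simp
qed

private lemma rs_nonneg: "scott_open V \<Longrightarrow> 0 \<le> rs V j k"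
  using rel_bound(2)[OF open_empty, of V j k] by (simp add: rs_def r_empty)

private lemma nu_single_eq: "scott_open W \<Longrightarrow> nu_single \<nu> (j, enat k) W = ennreal (rs W j k)"
  unfolding nu_single_def Uset_eq Vset_eq rs_def
proof -
  assume W: "scott_open W"
  have "\<nu> (W \<inter> Ua j k) = ennreal (r (W \<inter> Ua j k))" using nu_eq open_Int[OF W open_Ua] by blast
  moreover have "\<nu> (W \<inter> G (Suc k)) = ennreal (r (W \<inter> G (Suc k)))" using nu_eq open_Int[OF W open_G] by blast
  ultimately show "\<nu> (W \<inter> Ua j k) - \<nu> (W \<inter> G (Suc k)) = ennreal (r (W \<inter> Ua j k) - r (W \<inter> G (Suc k)))"
    using r_nonneg by (simp add: ennreal_minus)
qed


private lemma Nset_cases: "a \<in> Nset \<Longrightarrow> \<exists>j k. a = (j, enat k)"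
  by (auto simp: Nset_def)

private lemma atom_rel:
  assumes U: "scott_open U" and V: "scott_open V" and UV: "U \<subseteq> V"
  shows "\<exists>X. atom_sum \<nu> V = atom_sum \<nu> U + X \<and> X \<le> ennreal (r V - r U)"
proof -
  define D where "D a = nu_single \<nu> a V - nu_single \<nu> a U" for a
  have Dv: "D (j, enat k) = ennreal (rs V j k - rs U j k)" for j k
    unfolding D_def using nu_single_eq[OF U] nu_single_eq[OF V] rs_nonneg[OF U]
    by (simp add: ennreal_minus)
  have split: "nu_single \<nu> a V = nu_single \<nu> a U + D a" if aN: "a \<in> Nset" for a
  proof -
    obtain j k where a: "a = (j, enat k)" using Nset_cases[OF aN] by blast
    have "nu_single \<nu> a U \<le> nu_single \<nu> a V"
      unfolding a nu_single_eq[OF U] nu_single_eq[OF V]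
      using rel_bound(2)[OF U V UV] by (simp add: ennreal_leI)
    then show ?thesis unfolding D_def by (simp add: add_diff_inverse_ennreal)
  qed
  have "atom_sum \<nu> V = (\<Sum>\<^sub>\<infinity>a\<in>Nset. nu_single \<nu> a U + D a)"
    unfolding atom_sum_def by (rule infsum_cong) (rule split)
  also have "\<dots> = atom_sum \<nu> U + (\<Sum>\<^sub>\<infinity>a\<in>Nset. D a)"
    unfolding atom_sum_def by (rule infsum_add) (rule ens)+
  finally have eq: "atom_sum \<nu> V = atom_sum \<nu> U + (\<Sum>\<^sub>\<infinity>a\<in>Nset. D a)" .
  have "(\<Sum>\<^sub>\<infinity>a\<in>Nset. D a) \<le> ennreal (r V - r U)"
  proof (rule infsum_le_finite_sums)
    show "D summable_on Nset" by (rule ens)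
    fix F assume F: "finite F" "F \<subseteq> Nset"
    obtain J where J: "\<forall>x\<in>fst ` F. x < J" using F(1) finite_nat_set_iff_bounded by blast
    obtain M where M: "\<forall>x\<in>(the_enat \<circ> snd) ` F. x < M" using F(1) finite_nat_set_iff_bounded by blast
    define h where "h p = (fst p, enat (snd p))" for p :: "nat \<times> nat"
    define P where "P = {..<J} \<times> {..<M}"
    have sub: "F \<subseteq> h ` P"
    proof
      fix x assume x: "x \<in> F"
      then obtain j k where xe: "x = (j, enat k)" using F(2) Nset_cases by blast
      have "fst x \<in> fst ` F" "(the_enat \<circ> snd) x \<in> (the_enat \<circ> snd) ` F" using x by blast+
      then have "fst x < J" "(the_enat \<circ> snd) x < M" using J M by blast+
      then have "j < J" "k < M" using xe by simp_all
      then show "x \<in> h ` P" unfolding P_def h_def xe by force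
    qed
    have inj: "inj_on h P" by (auto simp: inj_on_def h_def)
    have "sum D F \<le> sum D (h ` P)"
      by (rule sum_mono2) (use sub P_def in auto)
    also have "\<dots> = sum (D \<circ> h) P" by (rule sum.reindex[OF inj])
    also have "\<dots> = (\<Sum>p\<in>P. ennreal (rs V (fst p) (snd p) - rs U (fst p) (snd p)))"
      by (rule sum.cong) (auto simp: h_def Dv)
    also have "\<dots> = ennreal (\<Sum>p\<in>P. rs V (fst p) (snd p) - rs U (fst p) (snd p))"
      by (rule sum_ennreal) (use rel_bound(2)[OF U V UV] in auto)
    also have "(\<Sum>p\<in>P. rs V (fst p) (snd p) - rs U (fst p) (snd p)) = (\<Sum>j<J. \<Sum>k<M. rs V j k - rs U j k)"
      unfolding P_def by (simp add: sum.cartesian_product split_def)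
    also have "\<dots> = (\<Sum>k<M. \<Sum>j<J. rs V j k - rs U j k)" by (rule sum.swap)
    also have "ennreal \<dots> \<le> ennreal (r V - r U)"
      by (rule ennreal_leI) (rule rel_bound(1)[OF U V UV])
    finally show "sum D F \<le> ennreal (r V - r U)" .
  qed
  then show ?thesis using eq by blast
qed

private lemma atom_empty: "atom_sum \<nu> {} = 0"
  unfolding atom_sum_def nu_single_def by (simp add: nu_empty)

lemma part1: "scott_open V \<Longrightarrow> atom_sum \<nu> V \<le> \<nu> V"
  using atom_rel[OF open_empty, of V] atom_empty nu_eq r_empty by auto

definition rf where "rf W = enn2real (atom_sum \<nu> W)"

private lemma atom_fin: "scott_open W \<Longrightarrow> atom_sum \<nu> W < top"
  using part1 nu_fin order_le_less_trans by blast

private lemma atom_eq: "scott_open W \<Longrightarrow> atom_sum \<nu> W = ennreal (rf W)"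
  using atom_fin rf_def by simp

private lemma rf_nonneg: "0 \<le> rf W" by (simp add: rf_def)

private lemma rf_le: "scott_open W \<Longrightarrow> rf W \<le> r W"
  unfolding rf_def r_def using part1 nu_fin enn2real_mono by blast

private lemma rf_rel:
  assumes U: "scott_open U" and V: "scott_open V" and UV: "U \<subseteq> V"
  shows "rf U \<le> rf V" "rf V - rf U \<le> r V - r U"
proof -
  obtain X where X: "atom_sum \<nu> V = atom_sum \<nu> U + X" "X \<le> ennreal (r V - r U)"
    using atom_rel[OF U V UV] by blast
  have Xf: "X < top" using X(2) by (simp add: le_less_trans)
  have "rf V = rf U + enn2real X" unfolding rf_def X(1)
    using atom_fin[OF U] Xf by (simp add: enn2real_plus)
  moreover have "enn2real X \<le> r V - r U"
    using enn2real_mono[OF X(2)] r_mono[OF U V UV] by simp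
  moreover have "0 \<le> enn2real X" by simp
  ultimately show "rf U \<le> rf V" "rf V - rf U \<le> r V - r U" by linarith+
qed

private lemma rs_mod:
  assumes A: "scott_open A" and B: "scott_open B"
  shows "rs A j k + rs B j k = rs (A \<union> B) j k + rs (A \<inter> B) j k"
proof -
  have e: "(A \<inter> X) \<union> (B \<inter> X) = (A \<union> B) \<inter> X" "(A \<inter> X) \<inter> (B \<inter> X) = (A \<inter> B) \<inter> X" for X
    by blast+
  have 1: "r (A \<inter> Ua j k) + r (B \<inter> Ua j k) = r ((A \<union> B) \<inter> Ua j k) + r ((A \<inter> B) \<inter> Ua j k)"
    using r_mod[OF open_Int[OF A open_Ua[of j k]] open_Int[OF B open_Ua[of j k]]] unfolding e .
  have 2: "r (A \<inter> G (Suc k)) + r (B \<inter> G (Suc k)) = r ((A \<union> B) \<inter> G (Suc k)) + r ((A \<inter> B) \<inter> G (Suc k))"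
    using r_mod[OF open_Int[OF A open_G[of "Suc k"]] open_Int[OF B open_G[of "Suc k"]]] unfolding e .
  show ?thesis using 1 2 unfolding rs_def by simp
qed

private lemma atom_mod:
  assumes A: "scott_open A" and B: "scott_open B"
  shows "atom_sum \<nu> A + atom_sum \<nu> B = atom_sum \<nu> (A \<union> B) + atom_sum \<nu> (A \<inter> B)"
proof -
  have pt: "nu_single \<nu> a A + nu_single \<nu> a B = nu_single \<nu> a (A \<union> B) + nu_single \<nu> a (A \<inter> B)"
    if aN: "a \<in> Nset" for a
  proof -
    obtain j k where a: "a = (j, enat k)" using Nset_cases[OF aN] by blast
    have AB: "scott_open (A \<union> B)" "scott_open (A \<inter> B)" using open_Un[OF A B] open_Int[OF A B] by auto
    have "ennreal (rs A j k) + ennreal (rs B j k) = ennreal (rs A j k + rs B j k)"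
      using rs_nonneg[OF A] rs_nonneg[OF B] by (rule ennreal_plus[symmetric])
    also have "\<dots> = ennreal (rs (A \<union> B) j k + rs (A \<inter> B) j k)" using rs_mod[OF A B, of j k] by simp
    also have "\<dots> = ennreal (rs (A \<union> B) j k) + ennreal (rs (A \<inter> B) j k)"
      using rs_nonneg[OF AB(1)] rs_nonneg[OF AB(2)] by (rule ennreal_plus)
    finally show ?thesis unfolding a nu_single_eq[OF A] nu_single_eq[OF B]
      nu_single_eq[OF AB(1)] nu_single_eq[OF AB(2)] .
  qed
  have "atom_sum \<nu> A + atom_sum \<nu> B = (\<Sum>\<^sub>\<infinity>a\<in>Nset. nu_single \<nu> a A + nu_single \<nu> a B)"
    unfolding atom_sum_def by (rule infsum_add[symmetric]) (rule ens)+
  also have "\<dots> = (\<Sum>\<^sub>\<infinity>a\<in>Nset. nu_single \<nu> a (A \<union> B) + nu_single \<nu> a (A \<inter> B))"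
    by (rule infsum_cong) (rule pt)
  also have "\<dots> = atom_sum \<nu> (A \<union> B) + atom_sum \<nu> (A \<inter> B)"
    unfolding atom_sum_def by (rule infsum_add) (rule ens)+
  finally show ?thesis .
qed

private lemma rf_mod:
  assumes A: "scott_open A" and B: "scott_open B"
  shows "rf A + rf B = rf (A \<union> B) + rf (A \<inter> B)"
proof -
  have "enn2real (atom_sum \<nu> A + atom_sum \<nu> B) = enn2real (atom_sum \<nu> (A \<union> B) + atom_sum \<nu> (A \<inter> B))"
    using atom_mod[OF A B] by simp
  moreover have "enn2real (atom_sum \<nu> A + atom_sum \<nu> B) = rf A + rf B"
    unfolding rf_def by (rule enn2real_plus) (use atom_fin A B in auto)
  moreover have "enn2real (atom_sum \<nu> (A \<union> B) + atom_sum \<nu> (A \<inter> B)) = rf (A \<union> B) + rf (A \<inter> B)"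
    unfolding rf_def by (rule enn2real_plus) (use atom_fin open_Un[OF A B] open_Int[OF A B] in auto)
  ultimately show ?thesis by simp
qed


definition sv where "sv W = r W - rf W"

private lemma sv_nonneg: "scott_open W \<Longrightarrow> 0 \<le> sv W"
  using rf_le sv_def by simp

private lemma star_eq: "scott_open W \<Longrightarrow> nu_star \<nu> W = ennreal (sv W)"
  unfolding nu_star_def sv_def using nu_eq atom_eq rf_nonneg by (simp add: ennreal_minus)

private lemma sv_mono: "scott_open U \<Longrightarrow> scott_open V \<Longrightarrow> U \<subseteq> V \<Longrightarrow> sv U \<le> sv V"
proof -
  assume "scott_open U" "scott_open V" "U \<subseteq> V"
  from rf_rel[OF this] show "sv U \<le> sv V" unfolding sv_def by linarith
qed

lemma part2: "is_bounded_continuous_valuation (nu_star \<nu>)"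
  unfolding is_bounded_continuous_valuation_def is_continuous_valuation_def is_valuation_def
proof (intro conjI allI impI)
  show "nu_star \<nu> {} = 0" unfolding nu_star_def by (simp add: nu_empty)
  show "nu_star \<nu> UNIV < \<infinity>" using star_eq[OF open_UNIV] by simp
  fix U V assume a: "scott_open U \<and> scott_open V \<and> U \<subseteq> V"
  then have "sv U \<le> sv V" using sv_mono by blast
  then show "nu_star \<nu> U \<le> nu_star \<nu> V" unfolding star_eq[OF a[THEN conjunct1]] star_eq[OF a[THEN conjunct2, THEN conjunct1]]
    by (rule ennreal_leI)
next
  fix A B assume a: "scott_open A \<and> scott_open B"
  then have A: "scott_open A" and B: "scott_open B" by auto
  have AB: "scott_open (A \<union> B)" "scott_open (A \<inter> B)" using open_Un[OF A B] open_Int[OF A B] by auto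
  have "nu_star \<nu> A + nu_star \<nu> B = ennreal (sv A + sv B)"
    unfolding star_eq[OF A] star_eq[OF B] using sv_nonneg[OF A] sv_nonneg[OF B] by (rule ennreal_plus[symmetric])
  also have "sv A + sv B = sv (A \<union> B) + sv (A \<inter> B)"
    using r_mod[OF A B] rf_mod[OF A B] unfolding sv_def by simp
  also have "ennreal \<dots> = nu_star \<nu> (A \<union> B) + nu_star \<nu> (A \<inter> B)"
    unfolding star_eq[OF AB(1)] star_eq[OF AB(2)] using sv_nonneg[OF AB(1)] sv_nonneg[OF AB(2)] by (rule ennreal_plus)
  finally show "nu_star \<nu> A + nu_star \<nu> B = nu_star \<nu> (A \<union> B) + nu_star \<nu> (A \<inter> B)" .
next
  fix \<D> :: "jpt set set"
  assume h: "\<D> \<noteq> {} \<and> (\<forall>U\<in>\<D>. scott_open U) \<and> (\<forall>U\<in>\<D>. \<forall>V\<in>\<D>. \<exists>W\<in>\<D>. U \<subseteq> W \<and> V \<subseteq> W)"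
  have hne: "\<D> \<noteq> {}" and ho: "\<And>U. U \<in> \<D> \<Longrightarrow> scott_open U" using h by auto
  define W where "W = \<Union>\<D>"
  have Wo: "scott_open W" unfolding W_def using ho by (rule open_Union)
  have cv: "is_continuous_valuation \<nu>" using bcv unfolding is_bounded_continuous_valuation_def by (rule conjunct1)
  have nuW: "\<nu> W = (SUP U\<in>\<D>. \<nu> U)" unfolding W_def
    using cv[unfolded is_continuous_valuation_def, THEN conjunct2, rule_format, OF h] .
  define S where "S = (SUP U\<in>\<D>. nu_star \<nu> U)"
  have le1: "S \<le> nu_star \<nu> W" unfolding S_def
  proof (rule SUP_least)
    fix U assume "U \<in> \<D>"
    then have "scott_open U" "U \<subseteq> W" using ho W_def by auto
    then have "sv U \<le> sv W" using sv_mono Wo by blast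
    then show "nu_star \<nu> U \<le> nu_star \<nu> W" unfolding star_eq[OF Wo] star_eq[OF \<open>scott_open U\<close>]
      by (rule ennreal_leI)
  qed
  have key: "ennreal (sv W) + \<nu> U \<le> S + \<nu> W" if U: "U \<in> \<D>" for U
  proof -
    have Uo: "scott_open U" and UW: "U \<subseteq> W" using ho W_def U by auto
    have "ennreal (sv W) + \<nu> U = ennreal (sv W + r U)"
      unfolding nu_eq[OF Uo] using sv_nonneg[OF Wo] r_nonneg by (rule ennreal_plus[symmetric])
    also have "\<dots> \<le> ennreal (sv U + r W)"
      using rf_rel(1)[OF Uo Wo UW] unfolding sv_def by (intro ennreal_leI) simp
    also have "\<dots> = nu_star \<nu> U + \<nu> W"
      unfolding nu_eq[OF Wo] star_eq[OF Uo] using sv_nonneg[OF Uo] r_nonneg by (rule ennreal_plus)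
    also have "\<dots> \<le> S + \<nu> W" unfolding S_def using U by (intro add_right_mono SUP_upper)
    finally show ?thesis .
  qed
  have "ennreal (sv W) + \<nu> W = (SUP U\<in>\<D>. ennreal (sv W) + \<nu> U)"
    unfolding nuW using hne by (rule ennreal_SUP_add_right)
  also have "\<dots> \<le> S + \<nu> W" by (rule SUP_least) (rule key)
  finally have "\<nu> W + ennreal (sv W) \<le> \<nu> W + S" by (simp only: add.commute)
  then have "\<nu> W = \<infinity> \<or> ennreal (sv W) \<le> S" by (simp only: ennreal_add_left_cancel_le)
  then have "ennreal (sv W) \<le> S" using nu_fin[OF Wo] by auto
  then have "nu_star \<nu> W \<le> S" using star_eq[OF Wo] by simp
  with le1 have "nu_star \<nu> W = S" by (rule antisym[rotated])
  then show "nu_star \<nu> (\<Union>\<D>) = (SUP U\<in>\<D>. nu_star \<nu> U)" unfolding S_def W_def .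
qed

end

theorem proposition3p7:
  assumes "is_bounded_continuous_valuation \<nu>"
  shows "(\<forall>U. scott_open U \<longrightarrow> atom_sum \<nu> U \<le> \<nu> U)
         \<and> is_bounded_continuous_valuation (nu_star \<nu>)"
  using part1[OF assms] part2[OF assms] by blast

end
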